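(* The two-field star-triangle map is 4D consistent in the following sense. Let $n\in\mathbb Z^4$ and let generic data $(a^{ij},c^{ij})$ be given on the six plaquettes $\sigma^{ij}(n)$, $1\le i<j\le4$. (1) If $n$ is black: in each of the four 3D cubes at $n$ (directions $i,j,k$) apply $F$ to obtain data on the plaquettes $\sigma^{ij}(n+e_k)$; then, for each $\ell$ and each triple $\{i,j,k\}$ not containing $\ell$, apply $G$ in the 3D cube at the (white) vertex $n+e_\ell$ with directions $i,j,k$ to obtain data on $\sigma^{ij}(n+e_\ell+e_k)$, $\sigma^{jk}(n+e_\ell+e_i)$, $\sigma^{ki}(n+e_\ell+e_j)$. Each plaquette $\sigma^{ij}(n+e_k+e_\ell)$ thereby receives two values, one from the cube at $n+e_\ell$ (directions $i,j,k$) and one from the cube at $n+e_k$ (directions $i,j,\ell$). Then the two $c$-values coincide and the squares of the two $a$-values coincide. (2) If $n$ is white: in each of the four 3D cubes at $n$ apply $G$ (with an arbitrary choice of the sign of $D$ in each cube) to obtain data on $\sigma^{ij}(n+e_k)$; then apply $F$ in the 3D cubes at the (black) vertices $n+e_\ell$. Then the two values of $a$ and the two values of $c$ obtained for each plaquette $\sigma^{ij}(n+e_k+e_\ell)$ coincide, for any choice of the signs.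
   Context: Vertices of $\mathbb Z^4$ with even coordinate sum are black, others white; $e_i$ are the unit vectors. A plaquette $\sigma^{ij}(m)=(m,m+e_i,m+e_i+e_j,m+e_j)$ carries numbers $a^{ij}(m),c^{ij}(m)$ with $a^{ji}=-a^{ij}$, $c^{ji}=-c^{ij}$. For a 3D cube at $m$ with directions $(i,j,k)$, the "base" data are those on $\sigma^{ij}(m),\sigma^{jk}(m),\sigma^{ki}(m)$, denoted $(a^{ij},c^{ij}),(a^{jk},c^{jk}),(a^{ki},c^{ki})$, and the "far" data are those on $\sigma^{ij}(m+e_k),\sigma^{jk}(m+e_i),\sigma^{ki}(m+e_j)$, denoted $(a^{ij}_k,c^{ij}_k),(a^{jk}_i,c^{jk}_i),(a^{ki}_j,c^{ki}_j)$. The two-field star-triangle map $F$ (far in terms of base) is $$a^{ij}_k=\frac{a^{jk}a^{ki}}{c^{ij}+c^{jk}+c^{ki}},\qquad c^{ij}_k=\frac12\left(c^{jk}+c^{ki}-c^{ij}-\frac{(a^{jk})^2+(a^{ki})^2-(a^{ij})^2}{c^{ij}+c^{jk}+c^{ki}}\right)$$ and cyclically; these formulas are compatible with reordering of $(i,j,k)$. Its (two-valued) inverse $G$ (base in terms of far) is $$c^{ij}=c^{jk}_i+c^{ki}_j+\frac{a^{jk}_ia^{ki}_j}{a^{ij}_k},\qquad a^{ij}=\frac{D}{a^{ij}_k},\ a^{jk}=\frac{D}{a^{jk}_i},\ a^{ki}=\frac{D}{a^{ki}_j},$$ where $D$ is either square root of $D^2=(a^{ij}_ka^{jk}_i)^2+(a^{jk}_ia^{ki}_j)^2+(a^{ki}_ja^{ij}_k)^2+2a^{ij}_ka^{jk}_ia^{ki}_j(c^{ij}_k+c^{jk}_i+c^{ki}_j)$.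 In the procedures of the claim, $F$ or $G$ "applied in the cube at $m$" computes the far data of that cube from its base data. *)

theory Defs
  imports Main
begin

text \<open>Directions are 0,1,2,3 (standing for e_1,...,e_4). Data on the plaquettes
  sigma^{ij}(m) of a fixed vertex m are functions a c :: nat => nat => 'a, where
  a i j = a^{ij}(m); they are antisymmetric on distinct directions.\<close>

definition antisym_data :: "(nat \<Rightarrow> nat \<Rightarrow> 'a::ab_group_add) \<Rightarrow> bool" where
  "antisym_data a \<longleftrightarrow> (\<forall>i<4. \<forall>j<4. i \<noteq> j \<longrightarrow> a j i = - a i j)"

definition distinct3 :: "nat \<Rightarrow> nat \<Rightarrow> nat \<Rightarrow> bool" where
  "distinct3 i j k \<longleftrightarrow> i < 4 \<and> j < 4 \<and> k < 4 \<and> i \<noteq> j \<and> j \<noteq> k \<and> i \<noteq> k"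

definition csum :: "(nat \<Rightarrow> nat \<Rightarrow> 'a::field) \<Rightarrow> nat \<Rightarrow> nat \<Rightarrow> nat \<Rightarrow> 'a" where
  "csum c i j k = c i j + c j k + c k i"

text \<open>Map F in the cube with directions (i,j,k): far data a^{ij}_k, c^{ij}_k
  on sigma^{ij}(m+e_k) from the base data a, c at m.\<close>

definition Fa :: "(nat \<Rightarrow> nat \<Rightarrow> 'a::field) \<Rightarrow> (nat \<Rightarrow> nat \<Rightarrow> 'a) \<Rightarrow> nat \<Rightarrow> nat \<Rightarrow> nat \<Rightarrow> 'a" where
  "Fa a c i j k = a j k * a k i / csum c i j k"

definition Fc :: "(nat \<Rightarrow> nat \<Rightarrow> 'a::field) \<Rightarrow> (nat \<Rightarrow> nat \<Rightarrow> 'a) \<Rightarrow> nat \<Rightarrow> nat \<Rightarrow> nat \<Rightarrow> 'a" where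
  "Fc a c i j k = (c j k + c k i - c i j
      - ((a j k)\<^sup>2 + (a k i)\<^sup>2 - (a i j)\<^sup>2) / csum c i j k) / 2"

text \<open>Map G applied in the cube with directions (i,j,k): the known data of the cube
  (on sigma^{ij}(m), sigma^{jk}(m), sigma^{ki}(m)) are inserted in the places of the
  variables a^{ij}_k, a^{jk}_i, a^{ki}_j (resp. c's) of the formulas for G, and the
  result is put on sigma^{ij}(m+e_k) etc.  D is the chosen square root of GD2.\<close>

definition GD2 :: "(nat \<Rightarrow> nat \<Rightarrow> 'a::field) \<Rightarrow> (nat \<Rightarrow> nat \<Rightarrow> 'a) \<Rightarrow> nat \<Rightarrow> nat \<Rightarrow> nat \<Rightarrow> 'a" where
  "GD2 a c i j k = (a i j * a j k)\<^sup>2 + (a j k * a k i)\<^sup>2 + (a k i * a i j)\<^sup>2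
      + 2 * a i j * a j k * a k i * (c i j + c j k + c k i)"

definition Gc :: "(nat \<Rightarrow> nat \<Rightarrow> 'a::field) \<Rightarrow> (nat \<Rightarrow> nat \<Rightarrow> 'a) \<Rightarrow> nat \<Rightarrow> nat \<Rightarrow> nat \<Rightarrow> 'a" where
  "Gc a c i j k = c j k + c k i + a j k * a k i / a i j"

definition Ga :: "'a::field \<Rightarrow> (nat \<Rightarrow> nat \<Rightarrow> 'a) \<Rightarrow> nat \<Rightarrow> nat \<Rightarrow> 'a" where
  "Ga D a i j = D / a i j"

end

theory Submission
  imports Defs
begin
lemma p1c:
  fixes a c :: "nat\<Rightarrow>nat\<Rightarrow>'a::field_char_0"
  assumes as: "a j i = - a i j" "a k i = - a i k" "a l i = - a i l" "a k j = - a j k" "a l j = - a j l" "a l k = - a k l"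
   and cs: "c j i = - c i j" "c k i = - c i k" "c l i = - c i l" "c k j = - c j k" "c l j = - c j l" "c l k = - c k l"
   and nz: "a i j \<noteq> 0" "a i k \<noteq> 0" "a i l \<noteq> 0" "a j k \<noteq> 0" "a j l \<noteq> 0" "a k l \<noteq> 0"
   and s: "S1 \<noteq> 0" "S2 \<noteq> 0" "S3 \<noteq> 0" "S4 \<noteq> 0"
   and e: "csum c j k l = S4" "csum c k i l = - S3" "csum c i j l = S2" "csum c j l k = - S4" "csum c l i k = S3" "csum c i j k = S1"
   and sub: "c i k = c i j + c j k - S1" "c i l = c i j + c j l - S2" "c k l = S4 - c j k + c j l"
   and S3e: "S3 = S4 - S1 + S2"
  shows "Gc (\<lambda>p q. Fa a c p q l) (\<lambda>p q. Fc a c p q l) i j k = Gc (\<lambda>p q. Fa a c p q k) (\<lambda>p q. Fc a c p q k) i j l"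
  unfolding Gc_def Fa_def Fc_def
  unfolding e
  unfolding as cs
  unfolding sub
  using nz s
  apply (simp add: field_simps)
  apply (simp add: S3e)
  apply (simp add: algebra_simps power2_eq_square)
  done
lemma gd2_expand:
  fixes A C :: "nat\<Rightarrow>nat\<Rightarrow>'a::field_char_0"
  assumes "A i j \<noteq> 0"
  shows "GD2 A C i j k / (A i j)^2 = (A j k)^2 + (A k i)^2 + (A j k * A k i / A i j)^2
     + 2 * (A j k * A k i / A i j) * (C i j + C j k + C k i)"
  using assms unfolding GD2_def by (simp add: field_simps power2_eq_square)

lemma finL:
  fixes ail ajl akl aij ajk aik S1 S2 S3 S4 :: "'a::field_char_0"
  assumes nz: "ail \<noteq> 0" "ajl \<noteq> 0" "akl \<noteq> 0" "S1 \<noteq> 0" "S2 \<noteq> 0" "S3 \<noteq> 0" "S4 \<noteq> 0"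
  shows "(- akl * ajl / S4)^2 + (ail * akl / S3)^2 + (- akl * ajl / S4 * (ail * akl / S3) / (- ajl * ail / S2))^2
     + 2 * (- akl * ajl / S4 * (ail * akl / S3) / (- ajl * ail / S2)) *
       (- S1/2 - ((ajl^2 + ail^2 - aij^2)/S2 + (akl^2 + ajl^2 - ajk^2)/S4 - (ail^2 + akl^2 - aik^2)/S3)/2)
   = akl^2/(S3^2*S4^2) * (ajl^2*S3^2 + ail^2*S4^2 + akl^2*S2^2 - S1*S2*S3*S4 - (ajl^2+ail^2-aij^2)*S3*S4
       - (akl^2+ajl^2-ajk^2)*S2*S3 + (ail^2+akl^2-aik^2)*S2*S4)"
proof -
  have X: "- akl * ajl / S4 * (ail * akl / S3) / (- ajl * ail / S2) = akl^2*S2/(S3*S4)"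
    using nz by (simp add: field_simps power2_eq_square)
  show ?thesis unfolding X using nz by (simp add: field_simps power2_eq_square)
qed
lemma finK:
  fixes ail ajl akl aij ajk aik S1 S2 S3 S4 :: "'a::field_char_0"
  assumes nz: "aik \<noteq> 0" "ajk \<noteq> 0" "akl \<noteq> 0" "S1 \<noteq> 0" "S2 \<noteq> 0" "S3 \<noteq> 0" "S4 \<noteq> 0"
  shows "(- akl * ajk / S4)^2 + (aik * akl / S3)^2 + (- akl * ajk / S4 * (aik * akl / S3) / (- ajk * aik / S1))^2
     + 2 * (- akl * ajk / S4 * (aik * akl / S3) / (- ajk * aik / S1)) *
       (- S2/2 - ((ajk^2 + aik^2 - aij^2)/S1 - (akl^2 + ajk^2 - ajl^2)/S4 + (aik^2 + akl^2 - ail^2)/S3)/2)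
   = akl^2/(S3^2*S4^2) * (ajk^2*S3^2 + aik^2*S4^2 + akl^2*S1^2 - S1*S2*S3*S4 - (ajk^2+aik^2-aij^2)*S3*S4
       + (akl^2+ajk^2-ajl^2)*S1*S3 - (aik^2+akl^2-ail^2)*S1*S4)"
proof -
  have X: "- akl * ajk / S4 * (aik * akl / S3) / (- ajk * aik / S1) = akl^2*S1/(S3*S4)"
    using nz by (simp add: field_simps power2_eq_square)
  show ?thesis unfolding X using nz by (simp add: field_simps power2_eq_square)
qed

lemma p1d:
  fixes a c :: "nat\<Rightarrow>nat\<Rightarrow>'a::field_char_0"
  assumes as: "a j i = - a i j" "a k i = - a i k" "a l i = - a i l" "a k j = - a j k" "a l j = - a j l" "a l k = - a k l"
   and cs: "c j i = - c i j" "c k i = - c i k" "c l i = - c i l" "c k j = - c j k" "c l j = - c j l" "c l k = - c k l"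
   and nz: "a i j \<noteq> 0" "a i k \<noteq> 0" "a i l \<noteq> 0" "a j k \<noteq> 0" "a j l \<noteq> 0" "a k l \<noteq> 0"
   and s: "S1 \<noteq> 0" "S2 \<noteq> 0" "S3 \<noteq> 0" "S4 \<noteq> 0"
   and e: "csum c j k l = S4" "csum c k i l = - S3" "csum c i j l = S2" "csum c j l k = - S4" "csum c l i k = S3" "csum c i j k = S1"
   and sub: "c i k = c i j + c j k - S1" "c i l = c i j + c j l - S2" "c k l = S4 - c j k + c j l"
   and S3e: "S3 = S4 - S1 + S2"
  shows "GD2 (\<lambda>p q. Fa a c p q l) (\<lambda>p q. Fc a c p q l) i j k / (Fa a c i j l)^2 = GD2 (\<lambda>p q. Fa a c p q k) (\<lambda>p q. Fc a c p q k) i j l / (Fa a c i j k)^2"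
proof -
  have L1: "Fa a c j k l = - a k l * a j l / S4" "Fa a c k i l = a i l * a k l / S3"
     "Fa a c i j l = - a j l * a i l / S2"
    unfolding Fa_def e as by (simp_all add: field_simps)
  have K1: "Fa a c j l k = - a k l * a j k / S4" "Fa a c l i k = a i k * a k l / S3"
     "Fa a c i j k = - a j k * a i k / S1"
    unfolding Fa_def e as by (simp_all add: field_simps)
  have LS: "Fc a c i j l + Fc a c j k l + Fc a c k i l = - S1/2 - ((a j l^2 + a i l^2 - a i j^2)/S2
       + (a k l^2 + a j l^2 - a j k^2)/S4 - (a i l^2 + a k l^2 - a i k^2)/S3)/2"
    unfolding Fc_def e as cs sub using s by (simp add: field_simps)
  have KS: "Fc a c i j k + Fc a c j l k + Fc a c l i k = - S2/2 - ((a j k^2 + a i k^2 - a i j^2)/S1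
       - (a k l^2 + a j k^2 - a j l^2)/S4 + (a i k^2 + a k l^2 - a i l^2)/S3)/2"
    unfolding Fc_def e as cs sub using s by (simp add: field_simps)
  have nl: "Fa a c i j l \<noteq> 0" unfolding L1 using nz s by simp
  have nk: "Fa a c i j k \<noteq> 0" unfolding K1 using nz s by simp
  have P: "(a j l^2*S3^2 + a i l^2*S4^2 + a k l^2*S2^2 - S1*S2*S3*S4 - (a j l^2+a i l^2-a i j^2)*S3*S4
       - (a k l^2+a j l^2-a j k^2)*S2*S3 + (a i l^2+a k l^2-a i k^2)*S2*S4)
     = (a j k^2*S3^2 + a i k^2*S4^2 + a k l^2*S1^2 - S1*S2*S3*S4 - (a j k^2+a i k^2-a i j^2)*S3*S4
       + (a k l^2+a j k^2-a j l^2)*S1*S3 - (a i k^2+a k l^2-a i l^2)*S1*S4)"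
    unfolding S3e by (simp add: algebra_simps power2_eq_square)
  show ?thesis
    unfolding gd2_expand[of "\<lambda>p q. Fa a c p q l", OF nl] gd2_expand[of "\<lambda>p q. Fa a c p q k", OF nk]
    unfolding LS KS L1 K1
    using finL[of "a i l" "a j l" "a k l" S1 S2 S3 S4 "a i j" "a j k" "a i k"]
      finK[of "a i k" "a j k" "a k l" S1 S2 S3 S4 "a i j" "a j l" "a i l"] nz s P
    by simp
qed
lemma side:
  fixes Y1 Y2 Y3 Q e1 e2 B s1 s2 s3 :: "'a::field_char_0"
  assumes "Q = Y1 + Y2 + Y3" "Q \<noteq> 0"
  shows "((2 * e1 - 2 * e2 + Y1 + Y2 - Y3) - (2 * B + Y1^2 + Y2^2 - Y3^2 + 2 * (Y1 * s1 + Y2 * s2 - Y3 * s3)) / Q) / 2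
    = (Y1 * Y2 - B + Y1 * (e1 - e2 - s1) + Y2 * (e1 - e2 - s2) + Y3 * (s3 + e1 - e2)) / Q"
proof -
  have Y3: "Y3 = Q - Y1 - Y2" using assms by simp
  show ?thesis unfolding Y3 using assms(2) by (simp add: field_simps power2_eq_square)
qed

lemma fin2:
  fixes x y NL NK Q :: "'a::field"
  assumes "x * NL = y * NK" "x \<noteq> 0" "y \<noteq> 0" "Q \<noteq> 0"
  shows "NL / Q = NK / (x * Q / y)"
  using assms by (simp add: field_simps)

lemma p2c:
  fixes b d :: "nat\<Rightarrow>nat\<Rightarrow>'a::field_char_0" and D0 :: "nat set \<Rightarrow> 'a"
  assumes as: "b j i = - b i j" "b k i = - b i k" "b l i = - b i l" "b k j = - b j k" "b l j = - b j l" "b l k = - b k l"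
   and cs: "d j i = - d i j" "d k i = - d i k" "d l i = - d i l" "d k j = - d j k" "d l j = - d j l" "d l k = - d k l"
   and nz: "b i j \<noteq> 0" "b i k \<noteq> 0" "b i l \<noteq> 0" "b j k \<noteq> 0" "b j l \<noteq> 0" "b k l \<noteq> 0"
   and QL: "csum (\<lambda>p q. Gc b d p q l) i j k \<noteq> 0"
   and QK: "csum (\<lambda>p q. Gc b d p q k) i j l \<noteq> 0"
  shows "Fa (\<lambda>p q. Ga (D0 {p, q, l}) b p q) (\<lambda>p q. Gc b d p q l) i j k
            = Fa (\<lambda>p q. Ga (D0 {p, q, k}) b p q) (\<lambda>p q. Gc b d p q k) i j l"
proof -
  have QLe: "csum (\<lambda>p q. Gc b d p q l) i j k = - b j l * b i l / b i j - b k l * b j l / b j k + b i l * b k l / b i k"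
    unfolding csum_def Gc_def as cs by (simp add: field_simps)
  have QKe: "csum (\<lambda>p q. Gc b d p q k) i j l = - b j k * b i k / b i j + b k l * b j k / b j l - b i k * b k l / b i l"
    unfolding csum_def Gc_def as cs by (simp add: field_simps)
  have QQ: "b j k * b i k * csum (\<lambda>p q. Gc b d p q l) i j k = b j l * b i l * csum (\<lambda>p q. Gc b d p q k) i j l"
    unfolding QLe QKe using nz by (simp add: field_simps)
  have s1: "{j, l, k} = {j, k, l}" "{l, i, k} = {k, i, l}" by auto
  show ?thesis
    unfolding Fa_def Ga_def s1 as
    using QL QK nz QQ
    apply (simp add: field_simps)
    done
qed
lemma p2d:
  fixes b d :: "nat\<Rightarrow>nat\<Rightarrow>'a::field_char_0" and D0 :: "nat set \<Rightarrow> 'a"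
  assumes as: "b j i = - b i j" "b k i = - b i k" "b l i = - b i l" "b k j = - b j k" "b l j = - b j l" "b l k = - b k l"
   and cs: "d j i = - d i j" "d k i = - d i k" "d l i = - d i l" "d k j = - d j k" "d l j = - d j l" "d l k = - d k l"
   and nz: "b i j \<noteq> 0" "b i k \<noteq> 0" "b i l \<noteq> 0" "b j k \<noteq> 0" "b j l \<noteq> 0" "b k l \<noteq> 0"
   and QL: "csum (\<lambda>p q. Gc b d p q l) i j k \<noteq> 0"
   and QK: "csum (\<lambda>p q. Gc b d p q k) i j l \<noteq> 0"
   and G: "(D0 {j,k,l})^2 = GD2 b d j k l" "(D0 {k,i,l})^2 = GD2 b d k i l" "(D0 {i,j,l})^2 = GD2 b d i j l"
     "(D0 {j,l,k})^2 = GD2 b d j l k" "(D0 {l,i,k})^2 = GD2 b d l i k" "(D0 {i,j,k})^2 = GD2 b d i j k"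
  shows "Fc (\<lambda>p q. Ga (D0 {p, q, l}) b p q) (\<lambda>p q. Gc b d p q l) i j k
            = Fc (\<lambda>p q. Ga (D0 {p, q, k}) b p q) (\<lambda>p q. Gc b d p q k) i j l"
proof -
  have QLe: "csum (\<lambda>p q. Gc b d p q l) i j k = - b j l * b i l / b i j - b k l * b j l / b j k + b i l * b k l / b i k"
    unfolding csum_def Gc_def as cs by (simp add: field_simps)
  have QKe: "csum (\<lambda>p q. Gc b d p q k) i j l = - b j k * b i k / b i j + b k l * b j k / b j l - b i k * b k l / b i l"
    unfolding csum_def Gc_def as cs by (simp add: field_simps)
  have QQ: "b j k * b i k * csum (\<lambda>p q. Gc b d p q l) i j k = b j l * b i l * csum (\<lambda>p q. Gc b d p q k) i j l"
    unfolding QLe QKe using nz by (simp add: field_simps)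
  have s1: "{j, l, k} = {j, k, l}" "{l, i, k} = {k, i, l}" by auto
  obtain QLv where QLv: "csum (\<lambda>p q. Gc b d p q l) i j k = QLv" by blast
  obtain QKv where QKv: "csum (\<lambda>p q. Gc b d p q k) i j l = QKv" by blast
  have QLn: "QLv \<noteq> 0" using QL QLv by simp
  have QKs: "QKv = b j k * b i k * QLv / (b j l * b i l)" using QQ nz unfolding QLv QKv by (simp add: field_simps)
  have E: "QLv = - b j l * b i l / b i j - b k l * b j l / b j k + b i l * b k l / b i k" using QLe QLv by simp
  have st: "Fc (\<lambda>p q. Ga (D0 {p, q, l}) b p q) (\<lambda>p q. Gc b d p q l) i j k = 
     (Gc b d j k l + Gc b d k i l - Gc b d i j l - (GD2 b d j k l / (b j k)^2 + GD2 b d k i l / (b k i)^2 - GD2 b d i j l / (b i j)^2) / QLv) / 2"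
    unfolding Fc_def Ga_def power_divide G QLv ..
  have st2: "Fc (\<lambda>p q. Ga (D0 {p, q, k}) b p q) (\<lambda>p q. Gc b d p q k) i j l = 
     (Gc b d j l k + Gc b d l i k - Gc b d i j k - (GD2 b d j l k / (b j l)^2 + GD2 b d l i k / (b l i)^2 - GD2 b d i j k / (b i j)^2) / QKv) / 2"
    unfolding Fc_def Ga_def power_divide G QKv ..
  have QLY: "QLv = b k l * b l j / b j k + b i l * b l k / b k i + b j l * b l i / b i j"
    using QLv unfolding csum_def Gc_def using cs by (simp add: algebra_simps)
  have QKY: "QKv = b l k * b k j / b j l + b i k * b k l / b l i + b j k * b k i / b i j"
    using QKv unfolding csum_def Gc_def using cs by (simp add: algebra_simps)
  have linL: "Gc b d j k l + Gc b d k i l - Gc b d i j l = 2 * d i l - 2 * d j l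
     + b k l * b l j / b j k + b i l * b l k / b k i - b j l * b l i / b i j"
    unfolding Gc_def using cs by (simp add: algebra_simps)
  have linK: "Gc b d j l k + Gc b d l i k - Gc b d i j k = 2 * d i k - 2 * d j k
     + b l k * b k j / b j l + b i k * b k l / b l i - b j k * b k i / b i j"
    unfolding Gc_def using cs by (simp add: algebra_simps)
  have nz2: "b j k \<noteq> 0" "b k i \<noteq> 0" "b i j \<noteq> 0" "b j l \<noteq> 0" "b l i \<noteq> 0"
    using nz as by auto
  have TL: "GD2 b d j k l / (b j k)^2 + GD2 b d k i l / (b k i)^2 - GD2 b d i j l / (b i j)^2
    = 2 * (b k l)^2 + (b k l * b l j / b j k)^2 + (b i l * b l k / b k i)^2 - (b j l * b l i / b i j)^2
      + 2 * ((b k l * b l j / b j k) * (d j k + d k l + d l j) + (b i l * b l k / b k i) * (d k i + d i l + d l k)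
         - (b j l * b l i / b i j) * (d i j + d j l + d l i))"
    unfolding gd2_expand[of b j k d l, OF nz2(1)] gd2_expand[of b k i d l, OF nz2(2)] gd2_expand[of b i j d l, OF nz2(3)]
    using as by (simp add: algebra_simps)
  have TK: "GD2 b d j l k / (b j l)^2 + GD2 b d l i k / (b l i)^2 - GD2 b d i j k / (b i j)^2
    = 2 * (b k l)^2 + (b l k * b k j / b j l)^2 + (b i k * b k l / b l i)^2 - (b j k * b k i / b i j)^2
      + 2 * ((b l k * b k j / b j l) * (d j l + d l k + d k j) + (b i k * b k l / b l i) * (d l i + d i k + d k l)
         - (b j k * b k i / b i j) * (d i j + d j k + d k i))"
    unfolding gd2_expand[of b j l d k, OF nz2(4)] gd2_expand[of b l i d k, OF nz2(5)] gd2_expand[of b i j d k, OF nz2(3)]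
    using as by (simp add: algebra_simps)
  have QKn: "QKv \<noteq> 0" using QK QKv by simp
  have FL: "Fc (\<lambda>p q. Ga (D0 {p, q, l}) b p q) (\<lambda>p q. Gc b d p q l) i j k = 
     ((b k l * b l j / b j k) * (b i l * b l k / b k i) - (b k l)^2
       + (b k l * b l j / b j k) * (d i l - d j l - (d j k + d k l + d l j))
       + (b i l * b l k / b k i) * (d i l - d j l - (d k i + d i l + d l k))
       + (b j l * b l i / b i j) * ((d i j + d j l + d l i) + d i l - d j l)) / QLv"
    unfolding st linL TL by (rule side[OF QLY QLn])
  have FK: "Fc (\<lambda>p q. Ga (D0 {p, q, k}) b p q) (\<lambda>p q. Gc b d p q k) i j l = 
     ((b l k * b k j / b j l) * (b i k * b k l / b l i) - (b k l)^2
       + (b l k * b k j / b j l) * (d i k - d j k - (d j l + d l k + d k j))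
       + (b i k * b k l / b l i) * (d i k - d j k - (d l i + d i k + d k l))
       + (b j k * b k i / b i j) * ((d i j + d j k + d k i) + d i k - d j k)) / QKv"
    unfolding st2 linK TK by (rule side[OF QKY QKn])
  have NN: "b j k * b i k * ((b k l * b l j / b j k) * (b i l * b l k / b k i) - (b k l)^2
       + (b k l * b l j / b j k) * (d i l - d j l - (d j k + d k l + d l j))
       + (b i l * b l k / b k i) * (d i l - d j l - (d k i + d i l + d l k))
       + (b j l * b l i / b i j) * ((d i j + d j l + d l i) + d i l - d j l))
     = b j l * b i l * ((b l k * b k j / b j l) * (b i k * b k l / b l i) - (b k l)^2
       + (b l k * b k j / b j l) * (d i k - d j k - (d j l + d l k + d k j))
       + (b i k * b k l / b l i) * (d i k - d j k - (d l i + d i k + d k l))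
       + (b j k * b k i / b i j) * ((d i j + d j k + d k i) + d i k - d j k))"
    unfolding as cs using nz by (simp add: field_simps power2_eq_square)
  show ?thesis
    unfolding FL FK QKs by (rule fin2[OF NN]) (use nz QLn in auto)
qed

lemma W1:
  fixes a c :: "nat\<Rightarrow>nat\<Rightarrow>'a::field_char_0"
  assumes A: "antisym_data a" "antisym_data c" "\<forall>i<4. \<forall>j<4. i \<noteq> j \<longrightarrow> a i j \<noteq> 0"
    "\<forall>i j k. distinct3 i j k \<longrightarrow> csum c i j k \<noteq> 0"
   and X: "distinct3 i j k" "l < 4" "l \<notin> {i, j, k}"
  shows "Gc (\<lambda>p q. Fa a c p q l) (\<lambda>p q. Fc a c p q l) i j k = Gc (\<lambda>p q. Fa a c p q k) (\<lambda>p q. Fc a c p q k) i j l"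
   and "GD2 (\<lambda>p q. Fa a c p q l) (\<lambda>p q. Fc a c p q l) i j k / (Fa a c i j l)^2 = GD2 (\<lambda>p q. Fa a c p q k) (\<lambda>p q. Fc a c p q k) i j l / (Fa a c i j k)^2"
proof -
  have d: "i < 4" "j < 4" "k < 4" "i \<noteq> j" "j \<noteq> k" "i \<noteq> k" "l \<noteq> i" "l \<noteq> j" "l \<noteq> k"
    using X unfolding distinct3_def by auto
  have AS1: "\<And>p q. p < 4 \<Longrightarrow> q < 4 \<Longrightarrow> p \<noteq> q \<Longrightarrow> a q p = - a p q"
    using A(1) unfolding antisym_data_def by blast
  have AS2: "\<And>p q. p < 4 \<Longrightarrow> q < 4 \<Longrightarrow> p \<noteq> q \<Longrightarrow> c q p = - c p q"
    using A(2) unfolding antisym_data_def by blast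
  have as: "a j i = - a i j" "a k i = - a i k" "a l i = - a i l" "a k j = - a j k" "a l j = - a j l" "a l k = - a k l"
    using d X(2) by (auto intro!: AS1)
  have cs: "c j i = - c i j" "c k i = - c i k" "c l i = - c i l" "c k j = - c j k" "c l j = - c j l" "c l k = - c k l"
    using d X(2) by (auto intro!: AS2)
  have nz: "a i j \<noteq> 0" "a i k \<noteq> 0" "a i l \<noteq> 0" "a j k \<noteq> 0" "a j l \<noteq> 0" "a k l \<noteq> 0"
    using A(3) d X(2) by auto
  have s: "csum c i j k \<noteq> 0" "csum c i j l \<noteq> 0" "csum c l i k \<noteq> 0" "csum c j k l \<noteq> 0"
    using A(4) d X(2) unfolding distinct3_def by auto
  have e: "csum c j k l = csum c j k l" "csum c k i l = - csum c l i k" "csum c i j l = csum c i j l"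
     "csum c j l k = - csum c j k l" "csum c l i k = csum c l i k" "csum c i j k = csum c i j k"
    unfolding csum_def using as cs by (simp_all add: algebra_simps)
  have sub: "c i k = c i j + c j k - csum c i j k" "c i l = c i j + c j l - csum c i j l"
     "c k l = csum c j k l - c j k + c j l"
    unfolding csum_def using cs by (simp_all add: algebra_simps)
  have S3e: "csum c l i k = csum c j k l - csum c i j k + csum c i j l"
    unfolding csum_def using cs by (simp_all add: algebra_simps)
  show "Gc (\<lambda>p q. Fa a c p q l) (\<lambda>p q. Fc a c p q l) i j k = Gc (\<lambda>p q. Fa a c p q k) (\<lambda>p q. Fc a c p q k) i j l"
    by (rule p1c[OF as cs nz s e sub S3e])
  show "GD2 (\<lambda>p q. Fa a c p q l) (\<lambda>p q. Fc a c p q l) i j k / (Fa a c i j l)^2 = GD2 (\<lambda>p q. Fa a c p q k) (\<lambda>p q. Fc a c p q k) i j l / (Fa a c i j k)^2"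
    by (rule p1d[OF as cs nz s e sub S3e])
qed

lemma W2:
  fixes b d :: "nat\<Rightarrow>nat\<Rightarrow>'a::field_char_0" and D0 :: "nat set \<Rightarrow> 'a"
  assumes A: "antisym_data b" "antisym_data d" "\<forall>i<4. \<forall>j<4. i \<noteq> j \<longrightarrow> b i j \<noteq> 0"
    "\<forall>i j k. distinct3 i j k \<longrightarrow> (D0 {i, j, k})\<^sup>2 = GD2 b d i j k \<and> D0 {i, j, k} \<noteq> 0"
    "\<forall>l i j k. distinct3 i j k \<and> l < 4 \<and> l \<notin> {i, j, k} \<longrightarrow> csum (\<lambda>p q. Gc b d p q l) i j k \<noteq> 0"
   and X: "distinct3 i j k" "l < 4" "l \<notin> {i, j, k}"
  shows "Fa (\<lambda>p q. Ga (D0 {p, q, l}) b p q) (\<lambda>p q. Gc b d p q l) i j k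
            = Fa (\<lambda>p q. Ga (D0 {p, q, k}) b p q) (\<lambda>p q. Gc b d p q k) i j l"
   and "Fc (\<lambda>p q. Ga (D0 {p, q, l}) b p q) (\<lambda>p q. Gc b d p q l) i j k
            = Fc (\<lambda>p q. Ga (D0 {p, q, k}) b p q) (\<lambda>p q. Gc b d p q k) i j l"
proof -
  have d: "i < 4" "j < 4" "k < 4" "i \<noteq> j" "j \<noteq> k" "i \<noteq> k" "l \<noteq> i" "l \<noteq> j" "l \<noteq> k"
    using X unfolding distinct3_def by auto
  have AS1: "\<And>p q. p < 4 \<Longrightarrow> q < 4 \<Longrightarrow> p \<noteq> q \<Longrightarrow> b q p = - b p q"
    using A(1) unfolding antisym_data_def by blast
  have AS2: "\<And>p q. p < 4 \<Longrightarrow> q < 4 \<Longrightarrow> p \<noteq> q \<Longrightarrow> d q p = - d p q"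
    using A(2) unfolding antisym_data_def by blast
  have as: "b j i = - b i j" "b k i = - b i k" "b l i = - b i l" "b k j = - b j k" "b l j = - b j l" "b l k = - b k l"
    using d X(2) by (auto intro!: AS1)
  have cs: "d j i = - d i j" "d k i = - d i k" "d l i = - d i l" "d k j = - d j k" "d l j = - d j l" "d l k = - d k l"
    using d X(2) by (auto intro!: AS2)
  have nz: "b i j \<noteq> 0" "b i k \<noteq> 0" "b i l \<noteq> 0" "b j k \<noteq> 0" "b j l \<noteq> 0" "b k l \<noteq> 0"
    using A(3) d X(2) by auto
  have QL: "csum (\<lambda>p q. Gc b d p q l) i j k \<noteq> 0" using A(5) X by blast
  have QK: "csum (\<lambda>p q. Gc b d p q k) i j l \<noteq> 0" using A(5)[rule_format, of i j l k] d X(2) unfolding distinct3_def by auto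
  have G: "(D0 {j,k,l})^2 = GD2 b d j k l" "(D0 {k,i,l})^2 = GD2 b d k i l" "(D0 {i,j,l})^2 = GD2 b d i j l"
     "(D0 {j,l,k})^2 = GD2 b d j l k" "(D0 {l,i,k})^2 = GD2 b d l i k" "(D0 {i,j,k})^2 = GD2 b d i j k"
    using A(4) d X(2) unfolding distinct3_def by auto
  show "Fa (\<lambda>p q. Ga (D0 {p, q, l}) b p q) (\<lambda>p q. Gc b d p q l) i j k
            = Fa (\<lambda>p q. Ga (D0 {p, q, k}) b p q) (\<lambda>p q. Gc b d p q k) i j l"
    by (rule p2c[OF as cs nz QL QK])
  show "Fc (\<lambda>p q. Ga (D0 {p, q, l}) b p q) (\<lambda>p q. Gc b d p q l) i j k
            = Fc (\<lambda>p q. Ga (D0 {p, q, k}) b p q) (\<lambda>p q. Gc b d p q k) i j l"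
    by (rule p2d[OF as cs nz QL QK G])
qed

theorem theorem10:
  fixes a0 c0 :: "nat \<Rightarrow> nat \<Rightarrow> 'a::field_char_0"
    and D1 :: "nat \<Rightarrow> nat set \<Rightarrow> 'a"
    and b0 d0 :: "nat \<Rightarrow> nat \<Rightarrow> 'a::field_char_0"
    and D0 :: "nat set \<Rightarrow> 'a"
  shows
  \<comment> \<open>(1) n black: F at n, then G at the white vertices n+e_l (cube directions i,j,k,
      sign of D chosen arbitrarily as D1 l {i,j,k})\<close>
  "((antisym_data a0 \<and> antisym_data c0
     \<and> (\<forall>i<4. \<forall>j<4. i \<noteq> j \<longrightarrow> a0 i j \<noteq> 0)
     \<and> (\<forall>i j k. distinct3 i j k \<longrightarrow> csum c0 i j k \<noteq> 0)
     \<and> (\<forall>l i j k. distinct3 i j k \<and> l < 4 \<and> l \<notin> {i, j, k} \<longrightarrow>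
          (D1 l {i, j, k})\<^sup>2 = GD2 (\<lambda>p q. Fa a0 c0 p q l) (\<lambda>p q. Fc a0 c0 p q l) i j k))
   \<longrightarrow> (\<forall>i j k l. distinct3 i j k \<and> l < 4 \<and> l \<notin> {i, j, k} \<longrightarrow>
          Gc (\<lambda>p q. Fa a0 c0 p q l) (\<lambda>p q. Fc a0 c0 p q l) i j k
            = Gc (\<lambda>p q. Fa a0 c0 p q k) (\<lambda>p q. Fc a0 c0 p q k) i j l
        \<and> (Ga (D1 l {i, j, k}) (\<lambda>p q. Fa a0 c0 p q l) i j)\<^sup>2
            = (Ga (D1 k {i, j, l}) (\<lambda>p q. Fa a0 c0 p q k) i j)\<^sup>2))
   \<and>
  \<comment> \<open>(2) n white: G at n (signs D0 {i,j,k} arbitrary), then F at the black vertices n+e_l\<close>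
  ((antisym_data b0 \<and> antisym_data d0
     \<and> (\<forall>i<4. \<forall>j<4. i \<noteq> j \<longrightarrow> b0 i j \<noteq> 0)
     \<and> (\<forall>i j k. distinct3 i j k \<longrightarrow> (D0 {i, j, k})\<^sup>2 = GD2 b0 d0 i j k \<and> D0 {i, j, k} \<noteq> 0)
     \<and> (\<forall>l i j k. distinct3 i j k \<and> l < 4 \<and> l \<notin> {i, j, k} \<longrightarrow>
          csum (\<lambda>p q. Gc b0 d0 p q l) i j k \<noteq> 0))
   \<longrightarrow> (\<forall>i j k l. distinct3 i j k \<and> l < 4 \<and> l \<notin> {i, j, k} \<longrightarrow>
          Fa (\<lambda>p q. Ga (D0 {p, q, l}) b0 p q) (\<lambda>p q. Gc b0 d0 p q l) i j k
            = Fa (\<lambda>p q. Ga (D0 {p, q, k}) b0 p q) (\<lambda>p q. Gc b0 d0 p q k) i j l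
        \<and> Fc (\<lambda>p q. Ga (D0 {p, q, l}) b0 p q) (\<lambda>p q. Gc b0 d0 p q l) i j k
            = Fc (\<lambda>p q. Ga (D0 {p, q, k}) b0 p q) (\<lambda>p q. Gc b0 d0 p q k) i j l))"
proof (intro conjI impI allI)
  fix i j k l
  assume H: "antisym_data a0 \<and> antisym_data c0
     \<and> (\<forall>i<4. \<forall>j<4. i \<noteq> j \<longrightarrow> a0 i j \<noteq> 0)
     \<and> (\<forall>i j k. distinct3 i j k \<longrightarrow> csum c0 i j k \<noteq> 0)
     \<and> (\<forall>l i j k. distinct3 i j k \<and> l < 4 \<and> l \<notin> {i, j, k} \<longrightarrow>
          (D1 l {i, j, k})\<^sup>2 = GD2 (\<lambda>p q. Fa a0 c0 p q l) (\<lambda>p q. Fc a0 c0 p q l) i j k)"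
    and X: "distinct3 i j k \<and> l < 4 \<and> l \<notin> {i, j, k}"
  then have H1: "antisym_data a0" "antisym_data c0" "\<forall>i<4. \<forall>j<4. i \<noteq> j \<longrightarrow> a0 i j \<noteq> 0"
    "\<forall>i j k. distinct3 i j k \<longrightarrow> csum c0 i j k \<noteq> 0" and X1: "distinct3 i j k" "l < 4" "l \<notin> {i, j, k}"
    by auto
  show "Gc (\<lambda>p q. Fa a0 c0 p q l) (\<lambda>p q. Fc a0 c0 p q l) i j k
            = Gc (\<lambda>p q. Fa a0 c0 p q k) (\<lambda>p q. Fc a0 c0 p q k) i j l"
    by (rule W1(1)[OF H1 X1])
  have DL: "(D1 l {i, j, k})\<^sup>2 = GD2 (\<lambda>p q. Fa a0 c0 p q l) (\<lambda>p q. Fc a0 c0 p q l) i j k"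
    using H X by blast
  have DK: "(D1 k {i, j, l})\<^sup>2 = GD2 (\<lambda>p q. Fa a0 c0 p q k) (\<lambda>p q. Fc a0 c0 p q k) i j l"
    using H X unfolding distinct3_def by auto
  show "(Ga (D1 l {i, j, k}) (\<lambda>p q. Fa a0 c0 p q l) i j)\<^sup>2
            = (Ga (D1 k {i, j, l}) (\<lambda>p q. Fa a0 c0 p q k) i j)\<^sup>2"
    unfolding Ga_def power_divide DL DK using W1(2)[OF H1 X1] by simp
next
  fix i j k l
  assume H: "antisym_data b0 \<and> antisym_data d0
     \<and> (\<forall>i<4. \<forall>j<4. i \<noteq> j \<longrightarrow> b0 i j \<noteq> 0)
     \<and> (\<forall>i j k. distinct3 i j k \<longrightarrow> (D0 {i, j, k})\<^sup>2 = GD2 b0 d0 i j k \<and> D0 {i, j, k} \<noteq> 0)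
     \<and> (\<forall>l i j k. distinct3 i j k \<and> l < 4 \<and> l \<notin> {i, j, k} \<longrightarrow>
          csum (\<lambda>p q. Gc b0 d0 p q l) i j k \<noteq> 0)"
    and X: "distinct3 i j k \<and> l < 4 \<and> l \<notin> {i, j, k}"
  then have H1: "antisym_data b0" "antisym_data d0" "\<forall>i<4. \<forall>j<4. i \<noteq> j \<longrightarrow> b0 i j \<noteq> 0"
    "\<forall>i j k. distinct3 i j k \<longrightarrow> (D0 {i, j, k})\<^sup>2 = GD2 b0 d0 i j k \<and> D0 {i, j, k} \<noteq> 0"
    "\<forall>l i j k. distinct3 i j k \<and> l < 4 \<and> l \<notin> {i, j, k} \<longrightarrow> csum (\<lambda>p q. Gc b0 d0 p q l) i j k \<noteq> 0"
    and X1: "distinct3 i j k" "l < 4" "l \<notin> {i, j, k}"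
    by auto
  show "Fa (\<lambda>p q. Ga (D0 {p, q, l}) b0 p q) (\<lambda>p q. Gc b0 d0 p q l) i j k
            = Fa (\<lambda>p q. Ga (D0 {p, q, k}) b0 p q) (\<lambda>p q. Gc b0 d0 p q k) i j l"
    by (rule W2(1)[OF H1 X1])
  show "Fc (\<lambda>p q. Ga (D0 {p, q, l}) b0 p q) (\<lambda>p q. Gc b0 d0 p q l) i j k
            = Fc (\<lambda>p q. Ga (D0 {p, q, k}) b0 p q) (\<lambda>p q. Gc b0 d0 p q k) i j l"
    by (rule W2(2)[OF H1 X1])
qed

end
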